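(* Let $\mathbb{F}$ be a field and let $n>4$ be an integer. If $\mathcal{A}$ is a unital $\mathbb{F}$-algebra with $\dim\mathcal{A}=n$ and $l(\mathcal{A})>2^{n-3}$, then $l(\mathcal{A})=2^{n-3}+2^{p}$ for some $p\in\{0,\ldots,n-3\}$.
   Context: All algebras are finite-dimensional, unital, not necessarily associative algebras over the field $\mathbb{F}$. For a finite generating set $S$ of an algebra $\mathcal{A}$, a word in $S$ is any product (with any bracketing) of finitely many elements of $S$; its length is the number of factors, and $1$ is a word of length $0$. $L_i(S)$ is the linear span of all words in $S$ of length at most $i$. The length of $S$ is $l(S)=\min\{k\ge0: L_k(S)=\mathcal{A}\}$, and $l(\mathcal{A})=\max\{l(S): S\text{ a finite generating set of }\mathcal{A}\}$. *)

theory Defs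
  imports Complex_Main
begin

definition unital_fd_algebra ::
  "('f::field \<Rightarrow> 'a::ab_group_add \<Rightarrow> 'a) \<Rightarrow> ('a \<Rightarrow> 'a \<Rightarrow> 'a) \<Rightarrow> 'a \<Rightarrow> bool" where
  "unital_fd_algebra scl mult e \<longleftrightarrow>
     vector_space scl \<and>
     (\<exists>B. finite B \<and> module.span scl B = UNIV) \<and>
     (\<forall>x y z. mult (x + y) z = mult x z + mult y z) \<and>
     (\<forall>x y z. mult z (x + y) = mult z x + mult z y) \<and>
     (\<forall>c x y. mult (scl c x) y = scl c (mult x y)) \<and>
     (\<forall>c x y. mult x (scl c y) = scl c (mult x y)) \<and>
     (\<forall>x. mult e x = x \<and> mult x e = x)"

text \<open>word mult e S k w: w is a word in S of length k (any bracketing); e is the word of length 0.\<close>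
inductive word :: "('a \<Rightarrow> 'a \<Rightarrow> 'a) \<Rightarrow> 'a \<Rightarrow> 'a set \<Rightarrow> nat \<Rightarrow> 'a \<Rightarrow> bool"
  for mult e S where
  word_unit: "word mult e S 0 e"
| word_gen: "s \<in> S \<Longrightarrow> word mult e S 1 s"
| word_mult: "word mult e S i u \<Longrightarrow> word mult e S j v \<Longrightarrow> 1 \<le> i \<Longrightarrow> 1 \<le> j
      \<Longrightarrow> word mult e S (i + j) (mult u v)"

definition Lspan :: "('f::field \<Rightarrow> 'a::ab_group_add \<Rightarrow> 'a) \<Rightarrow> ('a \<Rightarrow> 'a \<Rightarrow> 'a) \<Rightarrow> 'a
    \<Rightarrow> 'a set \<Rightarrow> nat \<Rightarrow> 'a set" where
  "Lspan scl mult e S i = module.span scl {w. \<exists>j\<le>i. word mult e S j w}"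

definition gen_set :: "('f::field \<Rightarrow> 'a::ab_group_add \<Rightarrow> 'a) \<Rightarrow> ('a \<Rightarrow> 'a \<Rightarrow> 'a) \<Rightarrow> 'a
    \<Rightarrow> 'a set \<Rightarrow> bool" where
  "gen_set scl mult e S \<longleftrightarrow> finite S \<and>
     module.span scl {w. \<exists>j. word mult e S j w} = UNIV"

definition set_length :: "('f::field \<Rightarrow> 'a::ab_group_add \<Rightarrow> 'a) \<Rightarrow> ('a \<Rightarrow> 'a \<Rightarrow> 'a) \<Rightarrow> 'a
    \<Rightarrow> 'a set \<Rightarrow> nat" where
  "set_length scl mult e S = (LEAST k. Lspan scl mult e S k = UNIV)"

definition alg_length :: "('f::field \<Rightarrow> 'a::ab_group_add \<Rightarrow> 'a) \<Rightarrow> ('a \<Rightarrow> 'a \<Rightarrow> 'a) \<Rightarrow> 'a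
    \<Rightarrow> nat" where
  "alg_length scl mult e = Max {set_length scl mult e S | S. gen_set scl mult e S}"

end

theory Submission
  imports Defs
begin


definition rk :: "nat set \<Rightarrow> nat \<Rightarrow> nat" where
  "rk J x = card {j\<in>J. j < x}"

definition chainset :: "nat set \<Rightarrow> bool" where
  "chainset J \<longleftrightarrow> finite J \<and> 0 \<notin> J \<and> (\<forall>x\<in>J. 2 \<le> x \<longrightarrow> (\<exists>y\<in>J. \<exists>z\<in>J. x = y + z))"

lemma chainset_split:
  assumes "chainset J" "x \<in> J" "2 \<le> x"
  obtains y z where "y \<in> J" "z \<in> J" "x = y + z" "z \<le> y" "1 \<le> z"
proof -
  obtain y z where "y \<in> J" "z \<in> J" "x = y + z" using assms unfolding chainset_def by blast
  moreover have "0 \<notin> J" using assms unfolding chainset_def by blast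
  ultimately have "y \<noteq> 0" "z \<noteq> 0" by metis+
  show ?thesis
  proof (cases "z \<le> y")
    case True then show ?thesis using that[of y z] \<open>y \<in> J\<close> \<open>z \<in> J\<close> \<open>x = y + z\<close> \<open>z \<noteq> 0\<close> by simp
  next
    case False then show ?thesis using that[of z y] \<open>y \<in> J\<close> \<open>z \<in> J\<close> \<open>x = y + z\<close> \<open>y \<noteq> 0\<close> by simp
  qed
qed

lemma chainset_pos: "chainset J \<Longrightarrow> x \<in> J \<Longrightarrow> 1 \<le> x"
  unfolding chainset_def by (cases x) auto

lemma chainset_one:
  assumes "chainset J" "J \<noteq> {}" shows "1 \<in> J"
proof -
  have fin: "finite J" using assms unfolding chainset_def by blast
  define m where "m = Min J"
  have m: "m \<in> J" using Min_in[OF fin assms(2)] m_def by simp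
  have "1 \<le> m" using chainset_pos[OF assms(1) m] .
  moreover have "\<not> 2 \<le> m"
  proof
    assume "2 \<le> m"
    then obtain y z where "y \<in> J" "z \<in> J" "m = y + z" "z \<le> y" "1 \<le> z"
      using chainset_split[OF assms(1) m] by blast
    then have "y < m" "y \<in> J" by auto
    moreover have "m \<le> y" using Min_le[OF fin \<open>y \<in> J\<close>] m_def by simp
    ultimately show False by simp
  qed
  ultimately have "m = 1" by simp
  then show ?thesis using m by simp
qed

lemma rk_less:
  assumes "finite J" "z \<in> J" "z < y" shows "rk J z < rk J y"
proof -
  have "{j\<in>J. j < z} \<subset> {j\<in>J. j < y}" using assms by auto
  moreover have "finite {j\<in>J. j < y}" using assms by simp
  ultimately show ?thesis unfolding rk_def by (simp add: psubset_card_mono)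
qed

lemma rk_le:
  assumes "finite J" "z \<le> y" shows "rk J z \<le> rk J y"
proof -
  have "{j\<in>J. j < z} \<subseteq> {j\<in>J. j < y}" using assms by auto
  moreover have "finite {j\<in>J. j < y}" using assms by simp
  ultimately show ?thesis unfolding rk_def by (simp add: card_mono)
qed

lemma rk_one: "chainset J \<Longrightarrow> rk J 1 = 0"
  unfolding rk_def chainset_def by auto

lemma lemA:
  assumes cs: "chainset J"
  shows "y \<in> J \<Longrightarrow> z \<in> J \<Longrightarrow> z \<le> y \<Longrightarrow> y * 2 ^ rk J z \<le> z * 2 ^ rk J y"
proof (induction y rule: less_induct)
  case (less y)
  have fin: "finite J" using cs unfolding chainset_def by blast
  show ?case
  proof (cases "z = y")
    case True then show ?thesis by simp
  next
    case False
    then have zy: "z < y" using less by simp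
    have "1 \<le> z" using chainset_pos[OF cs less(3)] .
    then have "2 \<le> y" using zy by simp
    then obtain u v where uv: "u \<in> J" "v \<in> J" "y = u + v" "v \<le> u" "1 \<le> v"
      using chainset_split[OF cs less(2)] by blast
    have uy: "u < y" using uv by simp
    have ru: "rk J u + 1 \<le> rk J y" using rk_less[OF fin uv(1) uy] by simp
    have rz: "rk J z + 1 \<le> rk J y" using rk_less[OF fin less(3) zy] by simp
    have y2u: "y \<le> 2 * u" using uv by simp
    show ?thesis
    proof (cases "z \<le> u")
      case True
      have IH: "u * 2 ^ rk J z \<le> z * 2 ^ rk J u" using less(1)[OF uy uv(1) less(3) True] .
      have "y * 2 ^ rk J z \<le> 2 * (u * 2 ^ rk J z)" using y2u by simp
      also have "\<dots> \<le> 2 * (z * 2 ^ rk J u)" using IH by simp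
      also have "\<dots> = z * 2 ^ (rk J u + 1)" by simp
      also have "\<dots> \<le> z * 2 ^ rk J y" using ru by (intro mult_le_mono2 power_increasing) auto
      finally show ?thesis .
    next
      case False
      have "y * 2 ^ rk J z \<le> (2 * z) * 2 ^ rk J z" using y2u False by simp
      also have "\<dots> = z * 2 ^ (rk J z + 1)" by simp
      also have "\<dots> \<le> z * 2 ^ rk J y" using rz by (intro mult_le_mono2 power_increasing) auto
      finally show ?thesis .
    qed
  qed
qed

lemma lemA1:
  assumes cs: "chainset J" "y \<in> J" shows "y \<le> 2 ^ rk J y"
proof -
  have "1 \<in> J" using chainset_one[OF cs(1)] cs(2) by blast
  moreover have "1 \<le> y" using chainset_pos cs by blast
  ultimately show ?thesis using lemA[OF cs(1) cs(2), of 1] rk_one[OF cs(1)] by simp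
qed

lemma pow2_lt_double: "(p::nat) < t \<Longrightarrow> 2 * 2 ^ p \<le> (2::nat) ^ t"
  using power_increasing[of "Suc p" t "2::nat"] by simp

lemma pow2_less: "(2::nat) ^ m < 2 ^ n \<Longrightarrow> m < n"
  by (rule power_less_imp_less_exp[of "2::nat"]) auto

lemma lemB:
  assumes cs: "chainset J"
  shows "x \<in> J \<Longrightarrow> 1 \<le> rk J x \<Longrightarrow> 2 ^ rk J x < 2 * x \<Longrightarrow>
         \<exists>p < rk J x. x = 2 ^ (rk J x - 1) + 2 ^ p"
proof (induction x rule: less_induct)
  case (less x)
  have fin: "finite J" using cs unfolding chainset_def by blast
  define R where "R = rk J x"
  have "(2::nat) ^ 1 \<le> 2 ^ R" using less(3) R_def by (intro power_increasing) auto
  then have "2 \<le> x" using less(4) R_def by simp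
  then obtain y z where yz: "y \<in> J" "z \<in> J" "x = y + z" "z \<le> y" "1 \<le> z"
    using chainset_split[OF cs less(2)] by blast
  define i where "i = rk J y"
  define k where "k = rk J z"
  have yx: "y < x" using yz by simp
  have iR: "i < R" unfolding i_def R_def using rk_less[OF fin yz(1) yx] .
  have ybd: "y \<le> 2 ^ i" unfolding i_def using lemA1[OF cs yz(1)] .
  have zbd: "z \<le> 2 ^ k" unfolding k_def using lemA1[OF cs yz(2)] .
  have ki: "k \<le> i" unfolding k_def i_def using rk_le[OF fin yz(4)] .
  have A: "y * 2 ^ k \<le> z * 2 ^ i" unfolding k_def i_def using lemA[OF cs yz(1) yz(2) yz(4)] .
  have lt: "2 ^ R < 2 * x" using less(4) R_def by simp
  have "2 ^ R < (2::nat) ^ (i + 2)" using lt ybd yz by simp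
  then have "R < i + 2" by (rule pow2_less)
  then have Ri: "R = i + 1" using iR by simp
  have y1: "1 \<le> y" using yz by simp
  have xgt: "2 ^ i < x" using lt Ri by simp
  show ?case
  proof (cases i)
    case 0
    then have "y = 1" using ybd y1 by simp
    then have "z = 1" using yz by simp
    then show ?thesis using \<open>y = 1\<close> yz Ri 0 R_def[symmetric] by (intro exI[of _ 0]) auto
  next
    case (Suc m)
    have "2 ^ i < 2 * y" using xgt yz by simp
    moreover have "1 \<le> i" using Suc by simp
    ultimately have "\<exists>p<i. y = 2 ^ (i - 1) + 2 ^ p"
      using less(1)[OF yx yz(1), folded i_def] by blast
    then obtain p where p: "p < i" "y = 2 ^ (i - 1) + 2 ^ p" by blast
    show ?thesis
    proof (cases "k = i")
      case True
      have "z = y"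
      proof (rule ccontr)
        assume "z \<noteq> y" then have "z < y" using yz by simp
        then show False using rk_less[OF fin yz(2) \<open>z < y\<close>] True unfolding k_def i_def by simp
      qed
      then have "x = 2 ^ i + 2 ^ (p + 1)" using yz p Suc by simp
      then show ?thesis using Ri p R_def by (intro exI[of _ "p+1"]) auto
    next
      case False
      then have kl: "k < i" using ki by simp
      show ?thesis
      proof (cases "p = m")
        case True
        then have "y = 2 ^ i" using p Suc by simp
        then have "2 ^ k \<le> z" using A by simp
        then have "z = 2 ^ k" using zbd by simp
        then have "x = 2 ^ i + 2 ^ k" using yz \<open>y = 2 ^ i\<close> by simp
        then show ?thesis using Ri kl R_def by (intro exI[of _ k]) auto
      next
        case False
        then have pm: "p < m" using p Suc by simp
        then obtain t where t: "m = Suc t" by (cases m) auto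
        have it: "i = t + 2" using Suc t by simp
        have yt: "y = 2 ^ (t+1) + 2 ^ p" using p it by simp
        have pt: "p \<le> t" using pm t by simp
        have "2 ^ p \<le> (2::nat) ^ t" using pt by (rule power_increasing) simp
        have "(2::nat) ^ (t+2) = 2 * 2 ^ (t+1)" by simp
        have "2 ^ (t+2) < x" using xgt it by simp
        moreover have "(2::nat) ^ (t+2) = 2 ^ t + 2 ^ t + 2 ^ t + 2 ^ t" "(2::nat) ^ (t+1) = 2 ^ t + 2 ^ t" by simp_all
        ultimately have "2 ^ t < z" using yz(3) yt \<open>2 ^ p \<le> 2 ^ t\<close> by linarith
        then have "2 ^ t < (2::nat) ^ k" using zbd by (rule less_le_trans)
        then have "t < k" by (rule pow2_less)
        then have kt: "k = t + 1" using kl it by simp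
        have "(2 ^ (t+1) + 2 ^ p) * 2 ^ (t+1) \<le> z * 2 ^ (t+2)" using A yt kt it by simp
        then have "(2 ^ (t+1) + 2 ^ p) * 2 ^ (t+1) \<le> (2 * z) * 2 ^ (t+1)" by simp
        then have "2 ^ (t+1) + 2 ^ p \<le> 2 * z" by (simp only: mult_le_cancel2) simp
        moreover have "(0::nat) < 2 ^ p" by simp
        moreover have "(2::nat) ^ k = 2 ^ (t+1)" using kt by simp
        ultimately have "2 ^ k < 2 * z" by linarith
        moreover have "z < x" using yz by simp
        moreover have "1 \<le> k" using kt by simp
        ultimately have "\<exists>q<k. z = 2 ^ (k - 1) + 2 ^ q"
          using less(1)[OF _ yz(2), folded k_def] by blast
        then obtain q where q: "q < k" "z = 2 ^ (k - 1) + 2 ^ q" by blast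
        have zt: "z = 2 ^ t + 2 ^ q" "q \<le> t" using q kt by auto
        have x4: "x = 2 ^ (t+1) + 2 ^ p + 2 ^ t + 2 ^ q" using yz yt zt by simp
        have "2 ^ t < (2::nat) ^ p + 2 ^ q" using xgt x4 it by simp
        have "p = t \<or> q = t"
        proof (rule ccontr)
          assume "\<not> (p = t \<or> q = t)"
          then have "p < t" "q < t" using pt zt by auto
          then have "2 * 2 ^ p \<le> (2::nat) ^ t" "2 * 2 ^ q \<le> (2::nat) ^ t"
            using pow2_lt_double by auto
          then show False using \<open>2 ^ t < 2 ^ p + 2 ^ q\<close> by simp
        qed
        then show ?thesis
        proof
          assume "p = t"
          then have "x = 2 ^ i + 2 ^ q" using x4 it by simp
          then show ?thesis using Ri zt it R_def by (intro exI[of _ q]) auto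
        next
          assume "q = t"
          then have "x = 2 ^ i + 2 ^ p" using x4 it by simp
          then show ?thesis using Ri p R_def by (intro exI[of _ p]) auto
        qed
      qed
    qed
  qed
qed

lemma rk_card: "finite J \<Longrightarrow> L \<in> J \<Longrightarrow> rk J L + 1 \<le> card J"
proof -
  assume a: "finite J" "L \<in> J"
  have "{j\<in>J. j < L} \<subseteq> J - {L}" by auto
  then have "card {j\<in>J. j < L} \<le> card (J - {L})" using a by (intro card_mono) auto
  then show ?thesis using a unfolding rk_def by (simp add: card_Diff_singleton) (metis One_nat_def Suc_pred card_gt_0_iff empty_iff not_less_eq_eq)
qed

lemma comb_bound:
  assumes "chainset J" "L \<in> J" "card J + 1 \<le> n"
  shows "L \<le> 2 ^ (n - 2)"
proof -
  have "rk J L + 2 \<le> n" using rk_card[of J L] assms unfolding chainset_def by simp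
  then have "(2::nat) ^ rk J L \<le> 2 ^ (n - 2)" by (intro power_increasing) auto
  then show ?thesis using lemA1[OF assms(1,2)] by (meson order.trans)
qed

lemma comb_final:
  assumes cs: "chainset J" and L: "L \<in> J" and c: "card J + 1 \<le> n"
    and n: "4 < n" and big: "2 ^ (n - 3) < L"
  shows "\<exists>p\<le>n - 3. L = 2 ^ (n - 3) + 2 ^ p"
proof -
  have r: "rk J L + 2 \<le> n" using rk_card[of J L] cs L c unfolding chainset_def by simp
  have "2 ^ (n - 3) < (2::nat) ^ rk J L" using big lemA1[OF cs L] by (rule less_le_trans)
  then have "n - 3 < rk J L" by (rule pow2_less)
  then have rr: "rk J L = n - 2" using r n by simp
  define m where "m = n - 3"
  have m: "n = Suc (Suc (Suc m))" using n unfolding m_def by simp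
  have "(2::nat) ^ (n - 2) = 2 * 2 ^ (n - 3)" by (simp add: m)
  then have "2 ^ rk J L < 2 * L" using big rr by simp
  moreover have "1 \<le> rk J L" using rr n by simp
  ultimately obtain p where "p < rk J L" "L = 2 ^ (rk J L - 1) + 2 ^ p"
    using lemB[OF cs L] by blast
  then show ?thesis using rr n by (intro exI[of _ p]) (auto simp: numeral_3_eq_3 numeral_2_eq_2)
qed



locale ualg =
  fixes scl :: "'f::field \<Rightarrow> 'a::ab_group_add \<Rightarrow> 'a" and mult :: "'a \<Rightarrow> 'a \<Rightarrow> 'a" and e :: 'a
  assumes ua: "unital_fd_algebra scl mult e"
begin

sublocale vs: vector_space scl using ua unfolding unital_fd_algebra_def by blast

lemma addl: "mult (x + y) z = mult x z + mult y z" using ua unfolding unital_fd_algebra_def by blast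
lemma addr: "mult z (x + y) = mult z x + mult z y" using ua unfolding unital_fd_algebra_def by blast
lemma scll: "mult (scl c x) y = scl c (mult x y)" using ua unfolding unital_fd_algebra_def by blast
lemma sclr: "mult x (scl c y) = scl c (mult x y)" using ua unfolding unital_fd_algebra_def by blast
lemma unitl: "mult e x = x" using ua unfolding unital_fd_algebra_def by blast
lemma unitr: "mult x e = x" using ua unfolding unital_fd_algebra_def by blast

lemma mult_0l: "mult 0 x = 0"
proof -
  have "mult (0 + 0) x = mult 0 x + mult 0 x" by (rule addl)
  then show ?thesis by simp
qed

lemma mult_0r: "mult x 0 = 0"
proof -
  have "mult x (0 + 0) = mult x 0 + mult x 0" by (rule addr)
  then show ?thesis by simp
qed

lemma span_multl:
  assumes "x \<in> vs.span X" shows "mult x v \<in> vs.span ((\<lambda>w. mult w v) ` X)"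
proof -
  have sub: "vs.subspace {x. mult x v \<in> vs.span ((\<lambda>w. mult w v) ` X)}"
    unfolding vs.subspace_def by (auto simp: addl scll mult_0l vs.span_add vs.span_scale vs.span_zero)
  show ?thesis
    by (rule vs.span_induct[OF assms sub]) (auto intro: vs.span_base)
qed

lemma span_multr:
  assumes "x \<in> vs.span X" shows "mult v x \<in> vs.span ((\<lambda>w. mult v w) ` X)"
proof -
  have sub: "vs.subspace {x. mult v x \<in> vs.span ((\<lambda>w. mult v w) ` X)}"
    unfolding vs.subspace_def by (auto simp: addr sclr mult_0r vs.span_add vs.span_scale vs.span_zero)
  show ?thesis
    by (rule vs.span_induct[OF assms sub]) (auto intro: vs.span_base)
qed

lemma fd_exists: "\<exists>B. finite_dimensional_vector_space scl B"
proof -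
  obtain B0 where B0: "finite B0" "vs.span B0 = UNIV" using ua unfolding unital_fd_algebra_def by blast
  obtain B where B: "vs.independent B" "UNIV \<subseteq> vs.span B"
    using vs.basis_exists[of UNIV] by blast
  have "finite B" using vs.independent_span_bound[OF B0(1) B(1)] B0(2) by simp
  then have "finite_dimensional_vector_space scl B"
    using B by unfold_locales auto
  then show ?thesis by blast
qed

lemma e_nonzero: assumes "vs.dim (UNIV::'a set) \<noteq> 0" shows "e \<noteq> 0"
proof
  assume e0: "e = 0"
  have "\<And>x::'a. x = 0"
  proof -
    fix x
    have "x = mult e x" by (simp add: unitl)
    also have "\<dots> = 0" using e0 mult_0l by simp
    finally show "x = 0" .
  qed
  then have "(UNIV::'a set) = {0}" by auto
  obtain Bs where "finite_dimensional_vector_space scl Bs" using fd_exists by blast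
  then interpret fd: finite_dimensional_vector_space scl Bs .
  have "vs.dim (UNIV::'a set) = vs.dim {0::'a}" by (subst \<open>UNIV = {0}\<close>) (rule refl)
  also have "\<dots> = 0" using fd.dim_singleton[of 0] by simp
  finally have "vs.dim (UNIV::'a set) = 0" .
  then show False using assms by simp
qed

abbreviation "LL S k \<equiv> Lspan scl mult e S k"
abbreviation "WW S k \<equiv> {w. \<exists>j\<le>k. word mult e S j w}"

lemma LL_def': "LL S k = vs.span (WW S k)" unfolding Lspan_def by simp

lemma word_0: "word mult e S 0 w \<Longrightarrow> w = e"
  by (erule word.cases) auto

lemma word_2: "word mult e S k w \<Longrightarrow> 2 \<le> k \<Longrightarrow>
   \<exists>i j u v. 1 \<le> i \<and> 1 \<le> j \<and> i + j = k \<and> word mult e S i u \<and> word mult e S j v \<and> w = mult u v"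
  by (erule word.cases) auto

lemma word_in_LL: "word mult e S j w \<Longrightarrow> j \<le> k \<Longrightarrow> w \<in> LL S k"
  unfolding LL_def' by (intro vs.span_base) auto

lemma LL_mono: "i \<le> k \<Longrightarrow> LL S i \<subseteq> LL S k"
  unfolding LL_def' by (intro vs.span_mono) (use le_trans in blast)

lemma LL_sub: "(\<And>w j. word mult e S j w \<Longrightarrow> j \<le> k \<Longrightarrow> w \<in> LL S m) \<Longrightarrow> LL S k \<subseteq> LL S m"
  unfolding LL_def' by (intro vs.span_minimal) auto

lemma key_left:
  assumes "1 \<le> a" "LL S a = LL S (a - 1)" "word mult e S a u" "word mult e S b v" "1 \<le> b"
  shows "mult u v \<in> LL S (a + b - 1)"
proof -
  have "u \<in> vs.span (WW S (a - 1))" using word_in_LL[OF assms(3), of a] assms(2) LL_def' by simp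
  then have "mult u v \<in> vs.span ((\<lambda>w. mult w v) ` WW S (a - 1))" by (rule span_multl)
  moreover have "vs.span ((\<lambda>w. mult w v) ` WW S (a - 1)) \<subseteq> LL S (a + b - 1)"
  proof (rule vs.span_minimal)
    show "(\<lambda>w. mult w v) ` WW S (a - 1) \<subseteq> LL S (a + b - 1)"
    proof clarify
      fix w j assume w: "j \<le> a - 1" "word mult e S j w"
      show "mult w v \<in> LL S (a + b - 1)"
      proof (cases "j = 0")
        case True
        then have "w = e" using word_0 w by blast
        then show ?thesis using word_in_LL[OF assms(4)] assms unitl by simp
      next
        case False
        have "word mult e S (j + b) (mult w v)" using word_mult[OF w(2) assms(4)] False assms(5) by simp
        then show ?thesis using w assms by (intro word_in_LL) auto
      qed
    qed
  qed (simp add: LL_def')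
  ultimately show ?thesis by blast
qed

lemma key_right:
  assumes "1 \<le> b" "LL S b = LL S (b - 1)" "word mult e S a u" "word mult e S b v" "1 \<le> a"
  shows "mult u v \<in> LL S (a + b - 1)"
proof -
  have "v \<in> vs.span (WW S (b - 1))" using word_in_LL[OF assms(4), of b] assms(2) LL_def' by simp
  then have "mult u v \<in> vs.span ((\<lambda>w. mult u w) ` WW S (b - 1))" by (rule span_multr)
  moreover have "vs.span ((\<lambda>w. mult u w) ` WW S (b - 1)) \<subseteq> LL S (a + b - 1)"
  proof (rule vs.span_minimal)
    show "(\<lambda>w. mult u w) ` WW S (b - 1) \<subseteq> LL S (a + b - 1)"
    proof clarify
      fix w j assume w: "j \<le> b - 1" "word mult e S j w"
      show "mult u w \<in> LL S (a + b - 1)"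
      proof (cases "j = 0")
        case True
        then have "w = e" using word_0 w by blast
        then show ?thesis using word_in_LL[OF assms(3)] assms unitr by simp
      next
        case False
        have "word mult e S (a + j) (mult u w)" using word_mult[OF assms(3) w(2)] False assms(5) by simp
        then show ?thesis using w assms by (intro word_in_LL) auto
      qed
    qed
  qed (simp add: LL_def')
  ultimately show ?thesis by blast
qed


definition JJ :: "'a set \<Rightarrow> nat set" where
  "JJ S = {k. 1 \<le> k \<and> k \<le> set_length scl mult e S \<and> LL S k \<noteq> LL S (k - 1)}"

lemma JJ_closed:
  assumes k: "k \<in> JJ S" "2 \<le> k"
  shows "\<exists>a\<in>JJ S. \<exists>b\<in>JJ S. k = a + b"
proof (rule ccontr)
  assume nc: "\<not> (\<exists>a\<in>JJ S. \<exists>b\<in>JJ S. k = a + b)"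
  have ksl: "k \<le> set_length scl mult e S" using k unfolding JJ_def by simp
  have "LL S k \<subseteq> LL S (k - 1)"
  proof (rule LL_sub)
    fix w j assume w: "word mult e S j w" "j \<le> k"
    show "w \<in> LL S (k - 1)"
    proof (cases "j \<le> k - 1")
      case True then show ?thesis using word_in_LL[OF w(1)] by blast
    next
      case False
      then have jk: "j = k" using w by simp
      then obtain i j' u v where d: "1 \<le> i" "1 \<le> j'" "i + j' = k" "word mult e S i u"
        "word mult e S j' v" "w = mult u v"
        using word_2[OF w(1)] k(2) by blast
      have "i \<notin> JJ S \<or> j' \<notin> JJ S" using nc d(3) by blast
      then show ?thesis
      proof
        assume "i \<notin> JJ S"
        then have "LL S i = LL S (i - 1)" using d ksl unfolding JJ_def by simp
        then show ?thesis using key_left[OF d(1) _ d(4) d(5) d(2)] d by simp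
      next
        assume "j' \<notin> JJ S"
        then have "LL S j' = LL S (j' - 1)" using d ksl unfolding JJ_def by simp
        then show ?thesis using key_right[OF d(2) _ d(4) d(5) d(1)] d by simp
      qed
    qed
  qed
  then have "LL S k = LL S (k - 1)" using LL_mono[of "k - 1" k S] by auto
  then show False using k unfolding JJ_def by simp
qed

lemma JJ_chainset: "chainset (JJ S)"
proof -
  have "JJ S \<subseteq> {..set_length scl mult e S}" unfolding JJ_def by auto
  then have "finite (JJ S)" using finite_subset by blast
  moreover have "0 \<notin> JJ S" unfolding JJ_def by simp
  ultimately show ?thesis unfolding chainset_def using JJ_closed by blast
qed

lemma gen_full:
  assumes "gen_set scl mult e S" shows "\<exists>k. LL S k = UNIV"
proof -
  obtain Bs where "finite_dimensional_vector_space scl Bs" using fd_exists by blast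
  then interpret fd: finite_dimensional_vector_space scl Bs .
  define V where "V = {w. \<exists>j. word mult e S j w}"
  have V: "vs.span V = UNIV" using assms unfolding gen_set_def V_def by blast
  obtain B where B: "B \<subseteq> V" "vs.independent B" "V \<subseteq> vs.span B"
    by (rule vs.basis_exists[of V])
  have fB: "finite B" using fd.finiteI_independent[OF B(2)] .
  define f where "f b = (SOME j. word mult e S j b)" for b
  have f: "word mult e S (f b) b" if "b \<in> B" for b
  proof -
    have "\<exists>j. word mult e S j b" using B(1) that unfolding V_def by blast
    then show ?thesis unfolding f_def by (rule someI_ex)
  qed
  define K where "K = Max (f ` B)"
  have "B \<subseteq> WW S K"
  proof
    fix b assume b: "b \<in> B"
    have "f b \<le> K" unfolding K_def using fB b by (intro Max_ge) auto
    then show "b \<in> WW S K" using f[OF b] by blast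
  qed
  then have "vs.span B \<subseteq> LL S K" unfolding LL_def' by (rule vs.span_mono)
  moreover have "UNIV \<subseteq> vs.span B"
  proof -
    have "vs.span V \<subseteq> vs.span (vs.span B)" by (rule vs.span_mono[OF B(3)])
    then show ?thesis unfolding V vs.span_span .
  qed
  ultimately show ?thesis by blast
qed

lemma sl_props:
  assumes "gen_set scl mult e S"
  shows "LL S (set_length scl mult e S) = UNIV"
    and "\<And>k. k < set_length scl mult e S \<Longrightarrow> LL S k \<noteq> UNIV"
proof -
  have ex: "\<exists>k. LL S k = UNIV" using gen_full[OF assms] .
  show "LL S (set_length scl mult e S) = UNIV" unfolding set_length_def by (rule LeastI_ex[OF ex])
  show "\<And>k. k < set_length scl mult e S \<Longrightarrow> LL S k \<noteq> UNIV"
    unfolding set_length_def by (rule not_less_Least)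
qed

lemma sl_in_JJ:
  assumes "gen_set scl mult e S" "1 \<le> set_length scl mult e S"
  shows "set_length scl mult e S \<in> JJ S"
proof -
  have "set_length scl mult e S - 1 < set_length scl mult e S" using assms(2) by simp
  then have "LL S (set_length scl mult e S - 1) \<noteq> UNIV" by (rule sl_props(2)[OF assms(1)])
  then show ?thesis using sl_props(1)[OF assms(1)] assms(2) unfolding JJ_def by simp
qed

lemma JJ_card:
  assumes "gen_set scl mult e S" "vs.dim (UNIV::'a set) = n" "n \<noteq> 0"
  shows "card (JJ S) + 1 \<le> n"
proof -
  obtain Bs where "finite_dimensional_vector_space scl Bs" using fd_exists by blast
  then interpret fd: finite_dimensional_vector_space scl Bs .
  have e0: "e \<noteq> 0" using e_nonzero assms by simp
  have claim: "card {j\<in>JJ S. j \<le> k} + 1 \<le> vs.dim (WW S k)" for k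
  proof (induction k)
    case 0
    have "WW S 0 = {e}"
    proof
      show "WW S 0 \<subseteq> {e}"
      proof
        fix w assume "w \<in> WW S 0"
        then have "word mult e S 0 w" by simp
        then show "w \<in> {e}" using word_0 by simp
      qed
      show "{e} \<subseteq> WW S 0" by (simp add: word_unit)
    qed
    moreover have "{j\<in>JJ S. j \<le> 0} = {}" unfolding JJ_def by simp
    ultimately show ?case using e0 fd.dim_singleton[of e] by simp
  next
    case (Suc k)
    have sub: "WW S k \<subseteq> WW S (Suc k)"
    proof
      fix w assume "w \<in> WW S k"
      then obtain j where "j \<le> k" "word mult e S j w" by blast
      then show "w \<in> WW S (Suc k)" by (intro CollectI exI[of _ j]) simp
    qed
    show ?case
    proof (cases "Suc k \<in> JJ S")
      case True
      then have "LL S (Suc k) \<noteq> LL S k" unfolding JJ_def by simp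
      then have "LL S k \<subset> LL S (Suc k)"
        using LL_mono[of k "Suc k" S] by (intro psubsetI) auto
      then have "vs.span (WW S k) \<subset> vs.span (WW S (Suc k))" unfolding LL_def' .
      then have "vs.dim (WW S k) < vs.dim (WW S (Suc k))" by (rule fd.dim_psubset)
      moreover have "{j\<in>JJ S. j \<le> Suc k} = insert (Suc k) {j\<in>JJ S. j \<le> k}"
        using True by (auto simp: le_Suc_eq)
      moreover have "finite {j\<in>JJ S. j \<le> k}" by simp
      ultimately show ?thesis using Suc by simp
    next
      case False
      then have "{j\<in>JJ S. j \<le> Suc k} = {j\<in>JJ S. j \<le> k}" by (auto simp: le_Suc_eq)
      moreover have "vs.dim (WW S k) \<le> vs.dim (WW S (Suc k))" using fd.dim_subset[OF sub] .
      ultimately show ?thesis using Suc by simp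
    qed
  qed
  let ?s = "set_length scl mult e S"
  have "{j\<in>JJ S. j \<le> ?s} = JJ S" unfolding JJ_def by auto
  moreover have "vs.dim (WW S ?s) = vs.dim (UNIV::'a set)"
    using sl_props(1)[OF assms(1)] vs.dim_span[of "WW S ?s"] unfolding LL_def' by simp
  ultimately show ?thesis using claim[of ?s] assms by simp
qed

lemma per_set:
  assumes "gen_set scl mult e S" "vs.dim (UNIV::'a set) = n" "4 < n"
  shows "set_length scl mult e S \<le> 2 ^ (n - 2)"
    and "2 ^ (n - 3) < set_length scl mult e S \<Longrightarrow>
          \<exists>p\<le>n - 3. set_length scl mult e S = 2 ^ (n - 3) + 2 ^ p"
proof -
  have c: "card (JJ S) + 1 \<le> n" using JJ_card[OF assms(1,2)] assms(3) by simp
  show "set_length scl mult e S \<le> 2 ^ (n - 2)"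
  proof (cases "set_length scl mult e S = 0")
    case False
    then show ?thesis using comb_bound[OF JJ_chainset sl_in_JJ[OF assms(1)] c] by simp
  qed simp
  assume big: "2 ^ (n - 3) < set_length scl mult e S"
  then have "1 \<le> set_length scl mult e S" by (cases "set_length scl mult e S") auto
  then show "\<exists>p\<le>n - 3. set_length scl mult e S = 2 ^ (n - 3) + 2 ^ p"
    using comb_final[OF JJ_chainset sl_in_JJ[OF assms(1)] c assms(3) big] by simp
qed

end

theorem corollary4p7:
  fixes scl :: "'f::field \<Rightarrow> 'a::ab_group_add \<Rightarrow> 'a"
    and mult :: "'a \<Rightarrow> 'a \<Rightarrow> 'a" and e :: 'a and n :: nat
  assumes "unital_fd_algebra scl mult e"
    and "vector_space.dim scl (UNIV :: 'a set) = n"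
    and "n > 4"
    and "alg_length scl mult e > 2 ^ (n - 3)"
  shows "\<exists>p\<le>n - 3. alg_length scl mult e = 2 ^ (n - 3) + 2 ^ p"
proof -
  interpret ualg scl mult e using assms(1) by unfold_locales
  define G where "G = {set_length scl mult e S | S. gen_set scl mult e S}"
  have "G \<subseteq> {..2 ^ (n - 2)}" unfolding G_def using per_set(1)[OF _ assms(2,3)] by auto
  then have fG: "finite G" using finite_subset by blast
  obtain B0 where B0: "finite B0" "vs.span B0 = UNIV" using assms(1) unfolding unital_fd_algebra_def by blast
  have "B0 \<subseteq> {w. \<exists>j. word mult e B0 j w}"
  proof
    fix b assume "b \<in> B0"
    then have "word mult e B0 1 b" by (rule word_gen)
    then show "b \<in> {w. \<exists>j. word mult e B0 j w}" by (intro CollectI exI)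
  qed
  then have "vs.span B0 \<subseteq> vs.span {w. \<exists>j. word mult e B0 j w}" by (rule vs.span_mono)
  then have "gen_set scl mult e B0" unfolding gen_set_def using B0 by auto
  then have "G \<noteq> {}" unfolding G_def by blast
  then have "alg_length scl mult e \<in> G" unfolding alg_length_def G_def[symmetric] using Max_in[OF fG] by blast
  then obtain S where S: "gen_set scl mult e S" "alg_length scl mult e = set_length scl mult e S"
    unfolding G_def by blast
  show ?thesis using per_set(2)[OF S(1) assms(2,3)] assms(4) S(2) by simp
qed

end
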